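(* Let $\mathcal{X}$ be a nonempty finite set, let $k$ be a strong kernel on $\mathcal{X}$, and let $(T,w)$ be a hierarchy on $\mathcal{X}$ inducing $k$. Let $n\in\mathbb{N}$ and let $X,Y\subseteq\mathcal{X}$ with $|X|=|Y|=n$. Then $$K^k_{\mathfrak{B}}(X,Y)=\sum_{v\in V(T)}\omega(v)\cdot\min\{|X_v|,|Y_v|\}=K_{\sqcap}\big(H^k(X),H^k(Y)\big).$$
   Context: A rooted tree is a finite tree $T$ with a distinguished root vertex $r$. For a vertex $v$, its parent $p(v)$ is the vertex following $v$ on the unique path from $v$ to $r$, with the convention $p(r)=r$. The ancestors of $v$ are the vertices on the path from $v$ to $r$ (including $v$ and $r$); the depth of $v$ is the number of edges on this path. The lowest common ancestor $\mathrm{LCA}(u,v)$ is the unique vertex of maximum depth that is an ancestor of both $u$ and $v$. A hierarchy on a set $\mathcal{X}$ is a pair $(T,w)$ where $T$ is a rooted tree whose set of leaves is exactly $\mathcal{X}$, and $w:V(T)\to\mathbb{R}_{\ge 0}$ satisfies $w(v)\ge w(p(v))$ for all $v\in V(T)$. The kernel induced by $(T,w)$ is $k(x,y)=w(\mathrm{LCA}(x,y))$ for $x,y\in\mathcal{X}$. A strong kernel on a set $\mathcal{X}$ is a symmetric function $k:\mathcal{X}\times\mathcal{X}\to\mathbb{R}_{\ge 0}$ such that $k(x,y)\ge\min\{k(x,z),k(z,y)\}$ for all $x,y,z\in\mathcal{X}$. Given a hierarchy $(T,w)$ with root $r$, the additive weight $\omega:V(T)\to\mathbb{R}_{\ge0}$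 is $\omega(v)=w(v)-w(p(v))$ for $v\ne r$ and $\omega(r)=w(r)$. For $X\subseteq\mathcal{X}$ and $v\in V(T)$, $X_v$ denotes the set of elements of $X$ that are leaves of the subtree of $T$ rooted at $v$ (i.e. elements of $X$ having $v$ as an ancestor). The histogram of $X$ is the vector $H^k(X)\in\mathbb{R}^{V(T)}$ with $[H^k(X)]_v=\omega(v)\cdot|X_v|$. The histogram intersection kernel on $\mathbb{R}^t$ is $K_\sqcap(g,h)=\sum_{i=1}^t\min\{g_i,h_i\}$. For $X,Y$ of equal cardinality, $\mathfrak{B}(X,Y)$ is the set of all bijections between $X$ and $Y$ (viewed as sets of pairs $(x,y)$), and the optimal assignment kernel is $K^k_{\mathfrak{B}}(X,Y)=\max_{B\in\mathfrak{B}(X,Y)}\sum_{(x,y)\in B}k(x,y)$. *)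

theory Defs
  imports Complex_Main
begin

definition rooted_tree :: "'v set \<Rightarrow> 'v \<Rightarrow> ('v \<Rightarrow> 'v) \<Rightarrow> bool" where
  "rooted_tree V r p \<longleftrightarrow> finite V \<and> r \<in> V \<and> p ` V \<subseteq> V \<and> p r = r \<and>
     (\<forall>v\<in>V. \<exists>n. (p ^^ n) v = r)"

definition ancestors :: "('v \<Rightarrow> 'v) \<Rightarrow> 'v \<Rightarrow> 'v set" where
  "ancestors p v = {(p ^^ n) v | n. True}"

definition depth :: "'v \<Rightarrow> ('v \<Rightarrow> 'v) \<Rightarrow> 'v \<Rightarrow> nat" where
  "depth r p v = (LEAST n. (p ^^ n) v = r)"

definition LCA :: "'v \<Rightarrow> ('v \<Rightarrow> 'v) \<Rightarrow> 'v \<Rightarrow> 'v \<Rightarrow> 'v" where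
  "LCA r p u v = (THE a. a \<in> ancestors p u \<inter> ancestors p v \<and>
      (\<forall>b \<in> ancestors p u \<inter> ancestors p v. depth r p b \<le> depth r p a))"

definition leaves :: "'v set \<Rightarrow> ('v \<Rightarrow> 'v) \<Rightarrow> 'v set" where
  "leaves V p = {v \<in> V. \<not> (\<exists>u\<in>V. u \<noteq> v \<and> p u = v)}"

definition hierarchy :: "'v set \<Rightarrow> 'v set \<Rightarrow> 'v \<Rightarrow> ('v \<Rightarrow> 'v) \<Rightarrow> ('v \<Rightarrow> real) \<Rightarrow> bool" where
  "hierarchy \<X> V r p w \<longleftrightarrow> rooted_tree V r p \<and> leaves V p = \<X> \<and>
     (\<forall>v\<in>V. 0 \<le> w v \<and> w v \<ge> w (p v))"

definition induced_kernel :: "'v \<Rightarrow> ('v \<Rightarrow> 'v) \<Rightarrow> ('v \<Rightarrow> real) \<Rightarrow> 'v \<Rightarrow> 'v \<Rightarrow> real" where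
  "induced_kernel r p w x y = w (LCA r p x y)"

definition strong_kernel :: "'a set \<Rightarrow> ('a \<Rightarrow> 'a \<Rightarrow> real) \<Rightarrow> bool" where
  "strong_kernel \<X> k \<longleftrightarrow> (\<forall>x\<in>\<X>. \<forall>y\<in>\<X>. k x y = k y x \<and> 0 \<le> k x y) \<and>
     (\<forall>x\<in>\<X>. \<forall>y\<in>\<X>. \<forall>z\<in>\<X>. k x y \<ge> min (k x z) (k z y))"

definition add_weight :: "'v \<Rightarrow> ('v \<Rightarrow> 'v) \<Rightarrow> ('v \<Rightarrow> real) \<Rightarrow> 'v \<Rightarrow> real" where
  "add_weight r p w v = (if v = r then w r else w v - w (p v))"

definition below :: "('v \<Rightarrow> 'v) \<Rightarrow> 'v set \<Rightarrow> 'v \<Rightarrow> 'v set" where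
  "below p X v = {x \<in> X. v \<in> ancestors p x}"

definition histogram :: "'v \<Rightarrow> ('v \<Rightarrow> 'v) \<Rightarrow> ('v \<Rightarrow> real) \<Rightarrow> 'v set \<Rightarrow> 'v \<Rightarrow> real" where
  "histogram r p w X v = add_weight r p w v * real (card (below p X v))"

definition hist_intersection :: "'i set \<Rightarrow> ('i \<Rightarrow> real) \<Rightarrow> ('i \<Rightarrow> real) \<Rightarrow> real" where
  "hist_intersection I g h = (\<Sum>i\<in>I. min (g i) (h i))"

definition opt_assign :: "('a \<Rightarrow> 'a \<Rightarrow> real) \<Rightarrow> 'a set \<Rightarrow> 'a set \<Rightarrow> real" where
  "opt_assign k X Y = Max {\<Sum>x\<in>X. k x (f x) | f. bij_betw f X Y}"

end

theory Submission
  imports Defs "HOL-Library.FuncSet"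
begin

lemma tree_finite: "rooted_tree V r p \<Longrightarrow> finite V"
  unfolding rooted_tree_def by simp

lemma hier_tree: "hierarchy \<X> V r p w \<Longrightarrow> rooted_tree V r p"
  unfolding hierarchy_def by simp

lemma anc_self: "x \<in> ancestors p x"
  unfolding ancestors_def by (auto intro: exI[of _ 0])

lemma anc_p: "p x \<in> ancestors p x"
  unfolding ancestors_def by (auto intro!: exI[of _ 1])

lemma anc_trans: "a \<in> ancestors p b \<Longrightarrow> b \<in> ancestors p c \<Longrightarrow> a \<in> ancestors p c"
proof -
  assume "a \<in> ancestors p b" "b \<in> ancestors p c"
  then obtain i j where "a = (p^^i) b" "b = (p^^j) c" unfolding ancestors_def by auto
  then have "a = (p^^(i+j)) c" by (simp add: funpow_add)
  then show ?thesis unfolding ancestors_def by auto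
qed

lemma anc_chain:
  assumes "a \<in> ancestors p x" "b \<in> ancestors p x"
  shows "a \<in> ancestors p b \<or> b \<in> ancestors p a"
proof -
  obtain i j where a: "a = (p^^i) x" and b: "b = (p^^j) x" using assms unfolding ancestors_def by auto
  show ?thesis
  proof (cases "j \<le> i")
    case True
    then have "a = (p^^(i-j)) b" unfolding a b by (metis comp_apply funpow_add le_add_diff_inverse2)
    then show ?thesis unfolding ancestors_def by auto
  next
    case False
    then have "b = (p^^(j-i)) a" unfolding a b
      by (metis comp_apply funpow_add le_add_diff_inverse2 less_or_eq_imp_le not_le)
    then show ?thesis unfolding ancestors_def by auto
  qed
qed

lemma funpow_V: "rooted_tree V r p \<Longrightarrow> x \<in> V \<Longrightarrow> (p^^n) x \<in> V"
  by (induction n) (auto simp: rooted_tree_def)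

lemma anc_V: "rooted_tree V r p \<Longrightarrow> x \<in> V \<Longrightarrow> ancestors p x \<subseteq> V"
  unfolding ancestors_def using funpow_V by fastforce

lemma anc_finite: "rooted_tree V r p \<Longrightarrow> x \<in> V \<Longrightarrow> finite (ancestors p x)"
  using anc_V rooted_tree_def finite_subset by metis

lemma funpow_root: "rooted_tree V r p \<Longrightarrow> (p^^n) r = r"
  by (induction n) (auto simp: rooted_tree_def)

lemma anc_root: "rooted_tree V r p \<Longrightarrow> ancestors p r = {r}"
  unfolding ancestors_def using funpow_root by fastforce

lemma depth_r: "rooted_tree V r p \<Longrightarrow> x \<in> V \<Longrightarrow> (p^^depth r p x) x = r"
  unfolding depth_def rooted_tree_def by (metis (mono_tags, lifting) LeastI_ex)

lemma r_in_anc: "rooted_tree V r p \<Longrightarrow> x \<in> V \<Longrightarrow> r \<in> ancestors p x"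
  using depth_r unfolding ancestors_def by (metis (mono_tags, lifting) mem_Collect_eq)

lemma depth_root: "depth r p r = 0"
  unfolding depth_def by simp

lemma depth_less:
  assumes T: "rooted_tree V r p" and bV: "b \<in> V" and a: "a \<in> ancestors p b" and ne: "a \<noteq> b"
  shows "depth r p a < depth r p b"
proof -
  obtain i where ai: "a = (p^^i) b" using a unfolding ancestors_def by auto
  define d where "d = depth r p b"
  have pd: "(p^^d) b = r" using depth_r[OF T bV] d_def by simp
  show ?thesis
  proof (cases "d \<le> i")
    case True
    then have "a = (p^^(i-d)) ((p^^d) b)" unfolding ai
      by (metis comp_apply funpow_add le_add_diff_inverse2)
    then have "a = r" using pd funpow_root[OF T] by simp
    moreover have "d \<noteq> 0"
    proof
      assume "d = 0" then have "b = r" using pd by simp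
      then show False using ne \<open>a = r\<close> by simp
    qed
    ultimately show ?thesis using depth_root d_def by (metis gr0I)
  next
    case False
    then have "(p^^(d-i)) a = r" unfolding ai using pd
      by (metis comp_apply funpow_add le_add_diff_inverse2 less_or_eq_imp_le not_le)
    then have "depth r p a \<le> d - i" unfolding depth_def by (rule Least_le)
    moreover have "i > 0" using ne ai by (cases i) auto
    ultimately show ?thesis using False d_def by linarith
  qed
qed

lemma anc_antisym:
  assumes T: "rooted_tree V r p" and "b \<in> V" "a \<in> ancestors p b" "b \<in> ancestors p a"
  shows "a = b"
proof (rule ccontr)
  assume ne: "a \<noteq> b"
  have aV: "a \<in> V" using anc_V[OF T] assms by blast
  show False using depth_less[OF T \<open>b\<in>V\<close> assms(3) ne] depth_less[OF T aV assms(4)] ne by auto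
qed

lemma LCA_props:
  assumes T: "rooted_tree V r p" and xV: "x \<in> V" and yV: "y \<in> V"
  shows "LCA r p x y \<in> ancestors p x \<inter> ancestors p y \<and>
    (\<forall>b\<in>ancestors p x \<inter> ancestors p y. depth r p b \<le> depth r p (LCA r p x y))"
proof -
  let ?C = "ancestors p x \<inter> ancestors p y"
  have fin: "finite ?C" using anc_finite[OF T xV] by simp
  have ne: "?C \<noteq> {}" using r_in_anc[OF T xV] r_in_anc[OF T yV] by blast
  obtain l where l: "l \<in> ?C" "Max (depth r p ` ?C) = depth r p l"
    using obtains_MAX[OF fin ne] by metis
  have lmax: "\<forall>b\<in>?C. depth r p b \<le> depth r p l"
    using l fin by (metis Max_ge finite_imageI image_eqI)
  have "LCA r p x y = l"
    unfolding LCA_def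
  proof (rule the_equality)
    show "l \<in> ?C \<and> (\<forall>b\<in>?C. depth r p b \<le> depth r p l)" using l lmax by blast
  next
    fix a assume a: "a \<in> ?C \<and> (\<forall>b\<in>?C. depth r p b \<le> depth r p a)"
    have aV: "a \<in> V" and lV: "l \<in> V" using a l anc_V[OF T xV] by auto
    show "a = l"
    proof (rule ccontr)
      assume ne: "a \<noteq> l"
      from anc_chain[of a p x l] a l have "a \<in> ancestors p l \<or> l \<in> ancestors p a" by blast
      then show False
        using depth_less[OF T lV _ ne] depth_less[OF T aV _ ne[symmetric]] a l lmax
        by (meson IntD1 leD)
    qed
  qed
  then show ?thesis using l lmax by simp
qed

lemma common_anc:
  assumes T: "rooted_tree V r p" and xV: "x \<in> V" and yV: "y \<in> V"
  shows "ancestors p (LCA r p x y) = ancestors p x \<inter> ancestors p y"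
proof -
  let ?l = "LCA r p x y"
  note L = LCA_props[OF T xV yV]
  have lV: "?l \<in> V" using L anc_V[OF T xV] by blast
  show ?thesis
  proof
    show "ancestors p ?l \<subseteq> ancestors p x \<inter> ancestors p y" using L anc_trans by fast
  next
    show "ancestors p x \<inter> ancestors p y \<subseteq> ancestors p ?l"
    proof
      fix b assume b: "b \<in> ancestors p x \<inter> ancestors p y"
      have bV: "b \<in> V" using b anc_V[OF T xV] by blast
      show "b \<in> ancestors p ?l"
      proof (rule ccontr)
        assume nb: "b \<notin> ancestors p ?l"
        then have "?l \<in> ancestors p b" using anc_chain[of b p x ?l] b L by blast
        moreover have "?l \<noteq> b" using nb anc_self by metis
        ultimately have "depth r p ?l < depth r p b" using depth_less[OF T bV] by blast
        then show False using L b by (meson leD)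
      qed
    qed
  qed
qed

lemma w_sum:
  assumes T: "rooted_tree V r p" and uV: "u \<in> V"
  shows "w u = (\<Sum>v\<in>ancestors p u. add_weight r p w v)"
  using uV
proof (induction "depth r p u" arbitrary: u rule: less_induct)
  case less
  show ?case
  proof (cases "u = r")
    case True
    then show ?thesis using anc_root[OF T] by (simp add: add_weight_def)
  next
    case False
    have puV: "p u \<in> V" using T less.prems unfolding rooted_tree_def by blast
    have eq: "ancestors p u = insert u (ancestors p (p u))"
    proof
      show "ancestors p u \<subseteq> insert u (ancestors p (p u))"
      proof
        fix a assume "a \<in> ancestors p u"
        then obtain i where a: "a = (p^^i) u" unfolding ancestors_def by auto
        show "a \<in> insert u (ancestors p (p u))"
        proof (cases i)
          case 0 then show ?thesis using a by simp
        next
          case (Suc j)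
          then have "a = (p^^j) (p u)" using a by (simp add: funpow_swap1)
          then show ?thesis unfolding ancestors_def by auto
        qed
      qed
    next
      show "insert u (ancestors p (p u)) \<subseteq> ancestors p u"
        using anc_self anc_p anc_trans by fast
    qed
    have nn: "p u \<noteq> u"
    proof
      assume "p u = u"
      then have "\<And>n. (p^^n) u = u" by (induct_tac n) auto
      then show False using depth_r[OF T less.prems] False by simp
    qed
    have notin: "u \<notin> ancestors p (p u)"
      using anc_antisym[OF T puV _ anc_p] nn by metis
    have dl: "depth r p (p u) < depth r p u"
      using depth_less[OF T less.prems anc_p nn] .
    have "w u = add_weight r p w u + w (p u)" using False by (simp add: add_weight_def)
    also have "w (p u) = (\<Sum>v\<in>ancestors p (p u). add_weight r p w v)"
      using less.hyps[OF dl puV] .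
    finally show ?thesis unfolding eq using notin anc_finite[OF T puV] by simp
  qed
qed

lemma kernel_sum:
  assumes T: "rooted_tree V r p" and xV: "x \<in> V" and yV: "y \<in> V"
  shows "w (LCA r p x y) = (\<Sum>v\<in>V. if v \<in> ancestors p x \<and> v \<in> ancestors p y then add_weight r p w v else 0)"
proof -
  let ?l = "LCA r p x y"
  have "?l \<in> ancestors p x" using conjunct1[OF LCA_props[OF T xV yV]] by (rule IntD1)
  then have lV: "?l \<in> V" using anc_V[OF T xV] by (rule subsetD[rotated])
  have finV: "finite V" using T by (rule tree_finite)
  have "w ?l = (\<Sum>v\<in>ancestors p ?l. add_weight r p w v)" using w_sum[OF T lV] .
  also have "ancestors p ?l = {v\<in>V. v \<in> ancestors p x \<and> v \<in> ancestors p y}"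
    using common_anc[OF T xV yV] anc_V[OF T xV] by blast
  also have "(\<Sum>v\<in>\<dots>. add_weight r p w v) = (\<Sum>v\<in>V. if v \<in> ancestors p x \<and> v \<in> ancestors p y then add_weight r p w v else 0)"
    by (rule sum.inter_filter[OF finV])
  finally show ?thesis .
qed


lemma add_weight_nonneg:
  assumes "hierarchy \<X> V r p w" "v \<in> V"
  shows "0 \<le> add_weight r p w v"
  using assms unfolding hierarchy_def add_weight_def by auto

lemma upper_bound:
  assumes H: "hierarchy \<X> V r p w" and XV: "X \<subseteq> V" and YV: "Y \<subseteq> V"
    and f: "bij_betw f X Y"
  shows "(\<Sum>x\<in>X. w (LCA r p x (f x))) \<le>
    (\<Sum>v\<in>V. add_weight r p w v * min (real (card (below p X v))) (real (card (below p Y v))))"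
proof -
  have T: "rooted_tree V r p" using H by (rule hier_tree)
  have finV: "finite V" using T by (rule tree_finite)
  have finX: "finite X" using XV finV finite_subset by blast
  have finY: "finite Y" using YV finV finite_subset by blast
  have fY: "\<And>x. x \<in> X \<Longrightarrow> f x \<in> Y" using f bij_betwE by blast
  let ?P = "\<lambda>v x. v \<in> ancestors p x \<and> v \<in> ancestors p (f x)"
  have "(\<Sum>x\<in>X. w (LCA r p x (f x))) =
      (\<Sum>x\<in>X. \<Sum>v\<in>V. if ?P v x then add_weight r p w v else 0)"
  proof (rule sum.cong[OF refl])
    fix x assume xX: "x \<in> X"
    have "x \<in> V" "f x \<in> V" using xX fY XV YV by auto
    then show "w (LCA r p x (f x)) = (\<Sum>v\<in>V. if ?P v x then add_weight r p w v else 0)"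
      by (rule kernel_sum[OF T])
  qed
  also have "\<dots> = (\<Sum>v\<in>V. \<Sum>x\<in>X. if ?P v x then add_weight r p w v else 0)"
    by (rule sum.swap)
  also have "\<dots> = (\<Sum>v\<in>V. add_weight r p w v * real (card {x\<in>X. ?P v x}))"
  proof (intro sum.cong refl)
    fix v
    have "(\<Sum>x\<in>X. if ?P v x then add_weight r p w v else 0) = (\<Sum>x\<in>{x\<in>X. ?P v x}. add_weight r p w v)"
      by (rule sum.inter_filter[OF finX, symmetric])
    then show "(\<Sum>x\<in>X. if ?P v x then add_weight r p w v else 0) = add_weight r p w v * real (card {x\<in>X. ?P v x})"
      by simp
  qed
  also have "\<dots> \<le> (\<Sum>v\<in>V. add_weight r p w v * min (real (card (below p X v))) (real (card (below p Y v))))"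
  proof (intro sum_mono mult_left_mono)
    fix v assume vV: "v \<in> V"
    show "0 \<le> add_weight r p w v" using add_weight_nonneg[OF H vV] .
    let ?S = "{x\<in>X. ?P v x}"
    have "card ?S \<le> card (below p X v)"
      by (rule card_mono) (auto simp: below_def finX)
    moreover have "card ?S \<le> card (below p Y v)"
    proof -
      have inj: "inj_on f ?S" using f bij_betw_def inj_on_subset by (metis (no_types, lifting) mem_Collect_eq subsetI)
      have "card ?S = card (f ` ?S)" using card_image[OF inj] by simp
      also have "\<dots> \<le> card (below p Y v)"
        by (rule card_mono) (auto simp: below_def finY fY)
      finally show ?thesis .
    qed
    ultimately show "real (card ?S) \<le> min (real (card (below p X v))) (real (card (below p Y v)))"
      by simp
  qed
  finally show ?thesis .
qed

lemma below_diff: "below p (X - {x}) v = below p X v - {x}"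
  unfolding below_def by auto

lemma greedy:
  assumes H: "hierarchy \<X> V r p w"
  shows "X \<subseteq> V \<Longrightarrow> Y \<subseteq> V \<Longrightarrow> card X = n \<Longrightarrow> card Y = n \<Longrightarrow>
    \<exists>f. bij_betw f X Y \<and> (\<Sum>x\<in>X. w (LCA r p x (f x))) =
    (\<Sum>v\<in>V. add_weight r p w v * min (real (card (below p X v))) (real (card (below p Y v))))"
proof -
  have T: "rooted_tree V r p" using H by (rule hier_tree)
  have finV: "finite V" using T by (rule tree_finite)
  show "X \<subseteq> V \<Longrightarrow> Y \<subseteq> V \<Longrightarrow> card X = n \<Longrightarrow> card Y = n \<Longrightarrow>
    \<exists>f. bij_betw f X Y \<and> (\<Sum>x\<in>X. w (LCA r p x (f x))) =
    (\<Sum>v\<in>V. add_weight r p w v * min (real (card (below p X v))) (real (card (below p Y v))))"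
proof (induction n arbitrary: X Y)
  case 0
  have "finite X" "finite Y" using 0 finV finite_subset by auto
  then have "X = {}" "Y = {}" using 0 by auto
  then show ?case by (auto simp: below_def)
next
  case (Suc n)
  have finX: "finite X" using Suc.prems finV finite_subset by blast
  have finY: "finite Y" using Suc.prems finV finite_subset by blast
  have XY: "X \<times> Y \<noteq> {}" using Suc.prems by auto
  obtain xy where xy: "xy \<in> X \<times> Y"
    "Max ((\<lambda>(a,b). depth r p (LCA r p a b)) ` (X \<times> Y)) = (\<lambda>(a,b). depth r p (LCA r p a b)) xy"
    using obtains_MAX[OF finite_cartesian_product[OF finX finY] XY] by blast
  obtain x y where xy_eq: "xy = (x, y)" by fastforce
  have xX: "x \<in> X" and yY: "y \<in> Y" using xy xy_eq by auto
  have xV: "x \<in> V" and yV: "y \<in> V" using xX yY Suc.prems by auto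
  have maxd: "\<And>a b. a \<in> X \<Longrightarrow> b \<in> Y \<Longrightarrow> depth r p (LCA r p a b) \<le> depth r p (LCA r p x y)"
  proof -
    fix a b assume "a \<in> X" "b \<in> Y"
    then have "(\<lambda>(a,b). depth r p (LCA r p a b)) (a,b) \<le> Max ((\<lambda>(a,b). depth r p (LCA r p a b)) ` (X \<times> Y))"
      using finX finY by (intro Max_ge) auto
    then show "depth r p (LCA r p a b) \<le> depth r p (LCA r p x y)" using xy xy_eq by simp
  qed
  let ?l = "LCA r p x y"
  note Lxy = LCA_props[OF T xV yV]
  let ?X' = "X - {x}" and ?Y' = "Y - {y}"
  obtain f' where f': "bij_betw f' ?X' ?Y'"
    "(\<Sum>x\<in>?X'. w (LCA r p x (f' x))) =
     (\<Sum>v\<in>V. add_weight r p w v * min (real (card (below p ?X' v))) (real (card (below p ?Y' v))))"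
  proof -
    have "?X' \<subseteq> V" "?Y' \<subseteq> V" using Suc.prems by auto
    moreover have "card ?X' = n" "card ?Y' = n" using Suc.prems xX yY finX finY by auto
    ultimately show ?thesis using Suc.IH[of ?X' ?Y'] that by blast
  qed
  define f where "f = f'(x := y)"
  have bij: "bij_betw f X Y"
  proof -
    have b1: "bij_betw f {x} {y}" unfolding f_def by (simp add: bij_betw_def)
    have b2: "bij_betw f ?X' ?Y'"
      using f'(1) by (rule bij_betw_cong[THEN iffD1, rotated]) (simp add: f_def)
    have "bij_betw f ({x} \<union> ?X') ({y} \<union> ?Y')"
      using bij_betw_combine[OF b1 b2] by simp
    then have "bij_betw f (insert x ?X') (insert y ?Y')" by simp
    then show ?thesis using xX yY by (simp add: insert_absorb)
  qed
  have sumf: "(\<Sum>a\<in>X. w (LCA r p a (f a))) = w ?l + (\<Sum>a\<in>?X'. w (LCA r p a (f' a)))"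
    using sum.remove[OF finX xX, of "\<lambda>a. w (LCA r p a (f a))"] by (simp add: f_def)
  have key: "min (card (below p X v)) (card (below p Y v)) =
      (if v \<in> ancestors p x \<and> v \<in> ancestors p y then 1 else 0) + min (card (below p ?X' v)) (card (below p ?Y' v))"
    if vV: "v \<in> V" for v
  proof -
    have fbx: "finite (below p X v)" "finite (below p Y v)" using finX finY by (auto simp: below_def)
    have emptyY: "below p Y v = {}" if vx: "v \<in> ancestors p x" and vy: "v \<notin> ancestors p y"
    proof (rule ccontr)
      assume "below p Y v \<noteq> {}"
      then obtain y' where y': "y' \<in> Y" "v \<in> ancestors p y'" unfolding below_def by auto
      have y'V: "y' \<in> V" using y' Suc.prems by auto
      have "depth r p v \<le> depth r p (LCA r p x y')" using LCA_props[OF T xV y'V] vx y' by blast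
      moreover have "depth r p (LCA r p x y') \<le> depth r p ?l" using maxd xX y' by blast
      moreover have "depth r p ?l < depth r p v"
      proof -
        have "v \<in> ancestors p ?l \<or> ?l \<in> ancestors p v" using anc_chain[of v p x ?l] vx Lxy by blast
        moreover have "v \<notin> ancestors p ?l" using anc_trans[of v p ?l y] Lxy vy by blast
        ultimately have "?l \<in> ancestors p v" by blast
        moreover have "?l \<noteq> v" using Lxy vy by blast
        ultimately show ?thesis using depth_less[OF T vV] by blast
      qed
      ultimately show False by linarith
    qed
    have emptyX: "below p X v = {}" if vx: "v \<notin> ancestors p x" and vy: "v \<in> ancestors p y"
    proof (rule ccontr)
      assume "below p X v \<noteq> {}"
      then obtain x' where x': "x' \<in> X" "v \<in> ancestors p x'" unfolding below_def by auto
      have x'V: "x' \<in> V" using x' Suc.prems by auto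
      have "depth r p v \<le> depth r p (LCA r p x' y)" using LCA_props[OF T x'V yV] vy x' by blast
      moreover have "depth r p (LCA r p x' y) \<le> depth r p ?l" using maxd yY x' by blast
      moreover have "depth r p ?l < depth r p v"
      proof -
        have "v \<in> ancestors p ?l \<or> ?l \<in> ancestors p v" using anc_chain[of v p y ?l] vy Lxy by blast
        moreover have "v \<notin> ancestors p ?l" using anc_trans[of v p ?l x] Lxy vx by blast
        ultimately have "?l \<in> ancestors p v" by blast
        moreover have "?l \<noteq> v" using Lxy vx by blast
        ultimately show ?thesis using depth_less[OF T vV] by blast
      qed
      ultimately show False by linarith
    qed
    have bx: "x \<in> below p X v \<longleftrightarrow> v \<in> ancestors p x" using xX by (auto simp: below_def)
    have by': "y \<in> below p Y v \<longleftrightarrow> v \<in> ancestors p y" using yY by (auto simp: below_def)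
    show ?thesis
    proof (cases "v \<in> ancestors p x"; cases "v \<in> ancestors p y")
      assume a: "v \<in> ancestors p x" "v \<in> ancestors p y"
      then have "x \<in> below p X v" "y \<in> below p Y v" using bx by' by auto
      then have "card (below p X v) \<ge> 1" "card (below p Y v) \<ge> 1"
        "card (below p X v - {x}) = card (below p X v) - 1" "card (below p Y v - {y}) = card (below p Y v) - 1"
        using fbx by (auto simp: card_gt_0_iff Suc_le_eq)
      moreover have "\<And>a b::nat. 1 \<le> a \<Longrightarrow> 1 \<le> b \<Longrightarrow> min a b = 1 + min (a - 1) (b - 1)" by linarith
      ultimately show ?thesis using a by (simp add: below_diff)
    next
      assume a: "v \<in> ancestors p x" "v \<notin> ancestors p y"
      then show ?thesis using emptyY by (simp add: below_diff)
    next
      assume a: "v \<notin> ancestors p x" "v \<in> ancestors p y"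
      then show ?thesis using emptyX by (simp add: below_diff)
    next
      assume a: "v \<notin> ancestors p x" "v \<notin> ancestors p y"
      then have "below p X v - {x} = below p X v" "below p Y v - {y} = below p Y v"
        using bx by' by auto
      then show ?thesis using a by (simp add: below_diff)
    qed
  qed
  have "(\<Sum>v\<in>V. add_weight r p w v * min (real (card (below p X v))) (real (card (below p Y v)))) =
     (\<Sum>v\<in>V. (if v \<in> ancestors p x \<and> v \<in> ancestors p y then add_weight r p w v else 0) +
        add_weight r p w v * min (real (card (below p ?X' v))) (real (card (below p ?Y' v))))"
  proof (intro sum.cong refl)
    fix v assume "v \<in> V"
    from key[OF this] have "real (min (card (below p X v)) (card (below p Y v))) =
      (if v \<in> ancestors p x \<and> v \<in> ancestors p y then 1 else 0) + real (min (card (below p ?X' v)) (card (below p ?Y' v)))"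
      by simp
    then show "add_weight r p w v * min (real (card (below p X v))) (real (card (below p Y v))) =
      (if v \<in> ancestors p x \<and> v \<in> ancestors p y then add_weight r p w v else 0) +
        add_weight r p w v * min (real (card (below p ?X' v))) (real (card (below p ?Y' v)))"
      by (simp add: of_nat_min[symmetric] distrib_left split: if_splits)
  qed
  also have "\<dots> = w ?l + (\<Sum>v\<in>V. add_weight r p w v * min (real (card (below p ?X' v))) (real (card (below p ?Y' v))))"
    using kernel_sum[OF T xV yV] by (simp add: sum.distrib)
  finally have "(\<Sum>v\<in>V. add_weight r p w v * min (real (card (below p X v))) (real (card (below p Y v))))
     = (\<Sum>a\<in>X. w (LCA r p a (f a)))" using sumf f'(2) by simp
  then show ?case using bij by metis
qed
qed


lemma mult_min_nonneg: "0 \<le> (c::real) \<Longrightarrow> c * min a b = min (c*a) (c*b)"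
  by (metis min_def mult_left_mono linorder_le_cases order_antisym)

theorem theorem2:
  fixes \<X> V :: "'v set" and r :: 'v and p :: "'v \<Rightarrow> 'v" and w :: "'v \<Rightarrow> real"
    and k :: "'v \<Rightarrow> 'v \<Rightarrow> real" and n :: nat and X Y :: "'v set"
  assumes "finite \<X>" and "\<X> \<noteq> {}"
    and "strong_kernel \<X> k"
    and "hierarchy \<X> V r p w"
    and "\<forall>x\<in>\<X>. \<forall>y\<in>\<X>. k x y = induced_kernel r p w x y"
    and "X \<subseteq> \<X>" and "Y \<subseteq> \<X>" and "card X = n" and "card Y = n"
  shows "opt_assign k X Y =
           (\<Sum>v\<in>V. add_weight r p w v * min (real (card (below p X v))) (real (card (below p Y v))))
       \<and> (\<Sum>v\<in>V. add_weight r p w v * min (real (card (below p X v))) (real (card (below p Y v))))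
           = hist_intersection V (histogram r p w X) (histogram r p w Y)"
proof
  note H = assms(4)
  have T: "rooted_tree V r p" using H by (rule hier_tree)
  have finV: "finite V" using T by (rule tree_finite)
  have XV: "\<X> \<subseteq> V" using H unfolding hierarchy_def leaves_def by blast
  have XsV: "X \<subseteq> V" and YsV: "Y \<subseteq> V" using XV assms(6,7) by auto
  have finX: "finite X" using XsV finV finite_subset by blast
  have finY: "finite Y" using YsV finV finite_subset by blast
  let ?S = "(\<Sum>v\<in>V. add_weight r p w v * min (real (card (below p X v))) (real (card (below p Y v))))"
  have kk: "\<And>f. bij_betw f X Y \<Longrightarrow> (\<Sum>x\<in>X. k x (f x)) = (\<Sum>x\<in>X. w (LCA r p x (f x)))"
  proof (rule sum.cong[OF refl])
    fix f x assume f: "bij_betw f X Y" and x: "x \<in> X"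
    have "f x \<in> Y" using f x bij_betwE by blast
    then show "k x (f x) = w (LCA r p x (f x))"
      using assms(5,6,7) x unfolding induced_kernel_def by blast
  qed
  let ?A = "{\<Sum>x\<in>X. k x (f x) | f. bij_betw f X Y}"
  have finA: "finite ?A"
  proof (rule finite_subset)
    show "?A \<subseteq> (\<lambda>g. \<Sum>x\<in>X. k x (g x)) ` (X \<rightarrow>\<^sub>E Y)"
    proof
      fix s assume "s \<in> ?A"
      then obtain f where f: "bij_betw f X Y" and s: "s = (\<Sum>x\<in>X. k x (f x))" by blast
      have "restrict f X \<in> X \<rightarrow>\<^sub>E Y" using bij_betwE[OF f] by (simp add: restrict_PiE_iff)
      moreover have "s = (\<Sum>x\<in>X. k x (restrict f X x))" unfolding s by (rule sum.cong) auto
      ultimately show "s \<in> (\<lambda>g. \<Sum>x\<in>X. k x (g x)) ` (X \<rightarrow>\<^sub>E Y)" by (rule rev_image_eqI[where f="\<lambda>g. \<Sum>x\<in>X. k x (g x)"])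
    qed
    show "finite ((\<lambda>g. \<Sum>x\<in>X. k x (g x)) ` (X \<rightarrow>\<^sub>E Y))"
      using finite_PiE[OF finX finY] by (rule finite_imageI)
  qed
  show "opt_assign k X Y = ?S"
    unfolding opt_assign_def
  proof (rule Max_eqI[OF finA])
    fix s assume "s \<in> ?A"
    then obtain f where f: "bij_betw f X Y" and s: "s = (\<Sum>x\<in>X. k x (f x))" by blast
    show "s \<le> ?S" unfolding s kk[OF f] by (rule upper_bound[OF H XsV YsV f])
  next
    from greedy[OF H XsV YsV assms(8,9)] obtain f where
      f0: "bij_betw f X Y \<and> (\<Sum>x\<in>X. w (LCA r p x (f x))) = ?S" by (rule exE)
    have f: "bij_betw f X Y" using f0 by (rule conjunct1)
    have eq: "?S = (\<Sum>x\<in>X. k x (f x))" using f0 kk[OF f] by simp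
    show "?S \<in> ?A" unfolding eq using f by blast
  qed
next
  note H = assms(4)
  show "(\<Sum>v\<in>V. add_weight r p w v * min (real (card (below p X v))) (real (card (below p Y v))))
           = hist_intersection V (histogram r p w X) (histogram r p w Y)"
    unfolding hist_intersection_def histogram_def
  proof (rule sum.cong[OF refl])
    fix v assume vV: "v \<in> V"
    have nn: "0 \<le> add_weight r p w v" using add_weight_nonneg[OF H vV] .
    show "add_weight r p w v * min (real (card (below p X v))) (real (card (below p Y v))) =
      min (add_weight r p w v * real (card (below p X v))) (add_weight r p w v * real (card (below p Y v)))"
      using nn by (rule mult_min_nonneg)
  qed
qed

end
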